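(* Let ${\cal M}$ be the set of matrix-valued functions $L(\lambda)=(1+\lambda^3)^{-1/3}\begin{pmatrix}1&\lambda f&0\\0&1&\lambda g\\\lambda h&0&1\end{pmatrix}$ with $f,g,h\in\mathbb C$, $fgh=1$ (a fixed branch of the cube root being used throughout). Let $L_i\in{\cal M}$, $i=1,2,3,4$, with parameters $(f_i,g_i,h_i)$, satisfy $L_1L_2=L_3L_4$, and suppose that the off-diagonal parts of $L_1,L_2$ are componentwise distinct from the off-diagonal parts of $L_3,L_4$ respectively (i.e. $f_1\ne f_3$, $g_1\ne g_3$, $h_1\ne h_3$, $f_2\ne f_4$, $g_2\ne g_4$, $h_2\ne h_4$). Then there exists $L_0\in{\cal M}$ such that $L_0L_1L_2=L_0L_3L_4=I$. *)

theory Defs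
  imports "HOL-Analysis.Analysis"
begin

definition Mpoly :: "complex \<Rightarrow> complex \<Rightarrow> complex \<Rightarrow> complex \<Rightarrow> complex^3^3" where
  "Mpoly f g h lam = vector [vector [1, lam * f, 0], vector [0, 1, lam * g], vector [lam * h, 0, 1]]"

definition Lmat :: "(complex \<Rightarrow> complex) \<Rightarrow> complex \<Rightarrow> complex \<Rightarrow> complex \<Rightarrow> complex \<Rightarrow> complex^3^3" where
  "Lmat cbrt f g h lam = (\<chi> i j. inverse (cbrt (1 + lam ^ 3)) * (Mpoly f g h lam $ i $ j))"

definition Ldom :: "complex set" where
  "Ldom = {lam. 1 + lam ^ 3 \<noteq> 0}"

end

theory Submission imports Defs begin

definition sm :: "complex \<Rightarrow> complex^3^3 \<Rightarrow> complex^3^3" where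
  "sm a A = (\<chi> i j. a * A $ i $ j)"

lemma sm_mult: "sm a A ** sm b B = sm (a*b) (A ** B)"
  by (simp add: sm_def matrix_matrix_mult_def vec_eq_iff sum_distrib_left mult_ac)

lemma Lmat_sm: "Lmat c f g h lam = sm (inverse (c (1 + lam^3))) (Mpoly f g h lam)"
  by (simp add: Lmat_def sm_def)

lemma prodI:
  fixes f1 g1 h1 f2 g2 h2 lam :: complex
  assumes "f1*g2 = (f1+f2)*(g1+g2)" "g1*h2 = (g1+g2)*(h1+h2)" "h1*f2 = (h1+h2)*(f1+f2)"
    "(f1+f2)*g1*h2 = -1" "(g1+g2)*h1*f2 = -1" "(h1+h2)*f1*g2 = -1"
  shows "Mpoly (-(f1+f2)) (-(g1+g2)) (-(h1+h2)) lam ** Mpoly f1 g1 h1 lam ** Mpoly f2 g2 h2 lam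
     = sm (1+lam^3) (mat 1)"
  apply (simp add: vec_eq_iff forall_3 Mpoly_def matrix_matrix_mult_def sum_3 sm_def mat_def)
  apply (intro conjI)
  subgoal using assms(4) by algebra
  subgoal by algebra
  subgoal using assms(1) by algebra
  subgoal using assms(2) by algebra
  subgoal using assms(5) by algebra
  subgoal by algebra
  subgoal by algebra
  subgoal using assms(3) by algebra
  subgoal using assms(6) by algebra
  done

lemma key:
  fixes f1 g1 h1 f2 g2 h2 f3 g3 h3 f4 g4 h4 :: complex
  assumes "f1*g1*h1 = 1" "f3*g3*h3 = 1" "f1+f2=f3+f4" "g1+g2=g3+g4"
    "f1*g2=f3*g4" "h1*f2=h3*f4" "f1\<noteq>f3"
  shows "(g1+g2)*h1*f2 = -1"
proof -
  define G where "G = g1+g2"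
  have g2: "g2 = G - g1" and g4: "g4 = G - g3" using assms(4) by (simp_all add: G_def eq_diff_eq add.commute)
  have a: "G*(f1-f3) = f1*g1 - f3*g3" using assms(5) unfolding g2 g4 by (simp add: algebra_simps)
  have b: "G*(f1-f3)*h1*h3 = h3 - h1"
  proof -
    have "G*(f1-f3)*h1*h3 = (f1*g1*h1)*h3 - (f3*g3*h3)*h1" using a by algebra
    then show ?thesis using assms(1,2) by simp
  qed
  have c: "(f1-f3)*h3 = (h1-h3)*f2"
  proof -
    show ?thesis using assms(3,6) by algebra
  qed
  have "(G*h1*f2 + 1)*((f1-f3)*h3) = 0"
  proof -
    have "(G*h1*f2 + 1)*((f1-f3)*h3) = (G*(f1-f3)*h1*h3)*f2 + (f1-f3)*h3" by (simp add: algebra_simps)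
    also have "\<dots> = 0" using b c by algebra
    finally show ?thesis .
  qed
  moreover have "h3 \<noteq> 0" using assms(2) by auto
  ultimately have "G*h1*f2 + 1 = 0" using assms(7) by simp
  then show ?thesis unfolding G_def by algebra
qed

lemma quad:
  fixes f1 g1 h1 f2 g2 :: complex
  assumes "f1*g1*h1 = 1" "(g1+g2)*h1*f2 = -1"
  shows "f1*g2 = (f1+f2)*(g1+g2)"
proof -
  have "h1 \<noteq> 0" using assms(1) by auto
  have "(f1*g2 - (f1+f2)*(g1+g2))*h1 = -(f1*g1*h1) - (g1+g2)*h1*f2" by (simp add: algebra_simps)
  also have "\<dots> = 0" using assms by simp
  finally show ?thesis using \<open>h1 \<noteq> 0\<close> by simp
qed
lemma sm_sm: "sm a (sm b A) = sm (a*b) A"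
  by (simp add: sm_def vec_eq_iff mult.assoc)

lemma sm_one: "sm 1 A = A"
  by (simp add: sm_def vec_eq_iff)

lemma L3: "Lmat c f0 g0 h0 lam ** Lmat c f1 g1 h1 lam ** Lmat c f2 g2 h2 lam
   = sm (inverse (c (1 + lam^3)) ^ 3) (Mpoly f0 g0 h0 lam ** Mpoly f1 g1 h1 lam ** Mpoly f2 g2 h2 lam)"
  by (simp add: Lmat_sm sm_mult power3_eq_cube)

theorem lemma29:
  fixes cbrt :: "complex \<Rightarrow> complex"
    and f1 g1 h1 f2 g2 h2 f3 g3 h3 f4 g4 h4 :: complex
  assumes cbrt: "\<forall>z. cbrt z ^ 3 = z"
    and M1: "f1 * g1 * h1 = 1" and M2: "f2 * g2 * h2 = 1"
    and M3: "f3 * g3 * h3 = 1" and M4: "f4 * g4 * h4 = 1"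
    and eq: "\<forall>lam\<in>Ldom. Lmat cbrt f1 g1 h1 lam ** Lmat cbrt f2 g2 h2 lam
                        = Lmat cbrt f3 g3 h3 lam ** Lmat cbrt f4 g4 h4 lam"
    and d1: "f1 \<noteq> f3" "g1 \<noteq> g3" "h1 \<noteq> h3"
    and d2: "f2 \<noteq> f4" "g2 \<noteq> g4" "h2 \<noteq> h4"
  shows "\<exists>f0 g0 h0. f0 * g0 * h0 = 1 \<and>
           (\<forall>lam\<in>Ldom. Lmat cbrt f0 g0 h0 lam ** Lmat cbrt f1 g1 h1 lam ** Lmat cbrt f2 g2 h2 lam = mat 1
                      \<and> Lmat cbrt f0 g0 h0 lam ** Lmat cbrt f3 g3 h3 lam ** Lmat cbrt f4 g4 h4 lam = mat 1)"
proof -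
  have c2: "cbrt (1 + 1^3) \<noteq> 0"
  proof
    assume "cbrt (1 + 1^3) = 0"
    then have "cbrt (1 + 1^3) ^ 3 = 0" by simp
    then show False using cbrt by simp
  qed
  have "(1::complex) \<in> Ldom" by (simp add: Ldom_def)
  with eq have "Lmat cbrt f1 g1 h1 1 ** Lmat cbrt f2 g2 h2 1 = Lmat cbrt f3 g3 h3 1 ** Lmat cbrt f4 g4 h4 1"
    by blast
  then have "sm (inverse (cbrt (1 + 1^3)) * inverse (cbrt (1 + 1^3))) (Mpoly f1 g1 h1 1 ** Mpoly f2 g2 h2 1)
     = sm (inverse (cbrt (1 + 1^3)) * inverse (cbrt (1 + 1^3))) (Mpoly f3 g3 h3 1 ** Mpoly f4 g4 h4 1)"
    by (simp only: Lmat_sm sm_mult)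
  then have E: "(Mpoly f1 g1 h1 1 ** Mpoly f2 g2 h2 1) $ i $ j = (Mpoly f3 g3 h3 1 ** Mpoly f4 g4 h4 1) $ i $ j" for i j
    using c2 by (simp add: sm_def vec_eq_iff)
  have sf: "f1+f2 = f3+f4" using E[of 1 2] by (simp add: Mpoly_def matrix_matrix_mult_def sum_3 add.commute mult.commute)
  have sg: "g1+g2 = g3+g4" using E[of 2 3] by (simp add: Mpoly_def matrix_matrix_mult_def sum_3 add.commute mult.commute)
  have sh: "h1+h2 = h3+h4" using E[of 3 1] by (simp add: Mpoly_def matrix_matrix_mult_def sum_3 add.commute mult.commute)
  have pf: "f1*g2 = f3*g4" using E[of 1 3] by (simp add: Mpoly_def matrix_matrix_mult_def sum_3 add.commute mult.commute)
  have pg: "g1*h2 = g3*h4" using E[of 2 1] by (simp add: Mpoly_def matrix_matrix_mult_def sum_3 add.commute mult.commute)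
  have ph: "h1*f2 = h3*f4" using E[of 3 2] by (simp add: Mpoly_def matrix_matrix_mult_def sum_3 add.commute mult.commute)
  have M1': "g1*h1*f1 = 1" "h1*f1*g1 = 1" using M1 by (simp_all add: mult_ac)
  have M3': "g3*h3*f3 = 1" "h3*f3*g3 = 1" using M3 by (simp_all add: mult_ac)
  have kg: "(g1+g2)*h1*f2 = -1" by (rule key[OF M1 M3 sf sg pf ph d1(1)])
  have kh: "(h1+h2)*f1*g2 = -1" by (rule key[OF M1'(1) M3'(1) sg sh pg pf d1(2)])
  have kf: "(f1+f2)*g1*h2 = -1" by (rule key[OF M1'(2) M3'(2) sh sf ph pg d1(3)])
  have qf: "f1*g2 = (f1+f2)*(g1+g2)" by (rule quad[OF M1 kg])
  have qg: "g1*h2 = (g1+g2)*(h1+h2)" by (rule quad[OF M1'(1) kh])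
  have qh: "h1*f2 = (h1+h2)*(f1+f2)" by (rule quad[OF M1'(2) kf])
  have P12: "Mpoly (-(f1+f2)) (-(g1+g2)) (-(h1+h2)) lam ** Mpoly f1 g1 h1 lam ** Mpoly f2 g2 h2 lam
     = sm (1+lam^3) (mat 1)" for lam
    by (rule prodI[OF qf qg qh kf kg kh])
  have P34: "Mpoly (-(f3+f4)) (-(g3+g4)) (-(h3+h4)) lam ** Mpoly f3 g3 h3 lam ** Mpoly f4 g4 h4 lam
     = sm (1+lam^3) (mat 1)" for lam
  proof (rule prodI)
    show "f3 * g4 = (f3 + f4) * (g3 + g4)" using qf sf sg pf by algebra
    show "g3 * h4 = (g3 + g4) * (h3 + h4)" using qg sg sh pg by algebra
    show "h3 * f4 = (h3 + h4) * (f3 + f4)" using qh sh sf ph by algebra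
    show "(f3 + f4) * g3 * h4 = - 1" using kf sf pg by algebra
    show "(g3 + g4) * h3 * f4 = - 1" using kg sg ph by algebra
    show "(h3 + h4) * f3 * g4 = - 1" using kh sh pf by algebra
  qed
  have prod0: "(-(f1+f2)) * (-(g1+g2)) * (-(h1+h2)) = 1" using kh qf by algebra
  have fin: "Lmat cbrt (-(f1+f2)) (-(g1+g2)) (-(h1+h2)) lam ** Lmat cbrt a b c lam ** Lmat cbrt d e f lam = mat 1"
    if "lam \<in> Ldom" and P: "Mpoly (-(f1+f2)) (-(g1+g2)) (-(h1+h2)) lam ** Mpoly a b c lam ** Mpoly d e f lam
     = sm (1+lam^3) (mat 1)" for lam a b c d e f
  proof -
    have nz: "1 + lam^3 \<noteq> 0" using that(1) by (simp add: Ldom_def)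
    have cc: "cbrt (1 + lam^3) ^ 3 = 1 + lam^3" using cbrt by blast
    have "inverse (cbrt (1 + lam^3)) ^ 3 * (1 + lam^3) = 1"
      using nz cc by (simp add: power_inverse)
    then show ?thesis unfolding L3 P sm_sm by (simp add: sm_one)
  qed
  show ?thesis
  proof (intro exI conjI ballI)
    show "(-(f1+f2)) * (-(g1+g2)) * (-(h1+h2)) = 1" by (rule prod0)
  next
    fix lam assume "lam \<in> Ldom"
    then show "Lmat cbrt (-(f1+f2)) (-(g1+g2)) (-(h1+h2)) lam ** Lmat cbrt f1 g1 h1 lam ** Lmat cbrt f2 g2 h2 lam = mat 1"
      using fin P12 by blast
  next
    fix lam assume "lam \<in> Ldom"
    then show "Lmat cbrt (-(f1+f2)) (-(g1+g2)) (-(h1+h2)) lam ** Lmat cbrt f3 g3 h3 lam ** Lmat cbrt f4 g4 h4 lam = mat 1"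
      using fin P34 sf sg sh by metis
  qed
qed

end
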